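(* There is an algorithm that, given an arbitrary temporal star $(G_s,L)$ on $n$ vertices in which every edge has at most $3$ labels, decides in $O(n\log n)$ time whether $(G_s,L)$ is explorable (i.e.\ solves \textsc{StarExp(3)}).
   Context: A temporal graph is a pair $(G,L)$ where $G=(V,E)$ is a graph and $L:E\to 2^{\mathbb{N}}$ assigns to each edge a set of positive integer labels (the discrete times at which the edge is available). A temporal star is a temporal graph whose underlying graph $G_s$ is a star with center $c$ and $n-1$ leaves. A time edge is a triple $(u,v,l)$ with $\{u,v\}\in E$ and $l\in L(\{u,v\})$. A journey from $u$ to $v$ is a sequence of time edges $(u,u_1,l_1),(u_1,u_2,l_2),\dots,(u_{r-1},v,l_r)$ with $l_1<l_2<\dots<l_r$. The temporal star $(G_s,L)$ is explorable if there is a journey starting and ending at the center $c$ that visits every vertex of $G_s$. The decision problem \textsc{StarExp($k$)} takes as input a temporal star in which every edge has at most $k$ labels and asks whether it is explorable. *)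

theory Defs
  imports Complex_Main
begin

definition temporal_graph :: "'v set \<Rightarrow> 'v set set \<Rightarrow> ('v set \<Rightarrow> nat set) \<Rightarrow> bool" where
  "temporal_graph V E L \<longleftrightarrow>
     (\<forall>e\<in>E. \<exists>u v. u \<in> V \<and> v \<in> V \<and> u \<noteq> v \<and> e = {u, v}) \<and>
     (\<forall>e\<in>E. \<forall>l\<in>L e. 0 < l)"

definition time_edge :: "'v set set \<Rightarrow> ('v set \<Rightarrow> nat set) \<Rightarrow> 'v \<times> 'v \<times> nat \<Rightarrow> bool" where
  "time_edge E L te \<longleftrightarrow> (case te of (u, v, l) \<Rightarrow> {u, v} \<in> E \<and> l \<in> L {u, v})"

definition journey :: "'v set set \<Rightarrow> ('v set \<Rightarrow> nat set) \<Rightarrow> 'v \<Rightarrow> 'v \<Rightarrow> ('v \<times> 'v \<times> nat) list \<Rightarrow> bool" where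
  "journey E L u v js \<longleftrightarrow>
     js \<noteq> [] \<and>
     (\<forall>i < length js. time_edge E L (js ! i)) \<and>
     fst (js ! 0) = u \<and>
     fst (snd (js ! (length js - 1))) = v \<and>
     (\<forall>i. Suc i < length js \<longrightarrow>
          fst (snd (js ! i)) = fst (js ! Suc i) \<and>
          snd (snd (js ! i)) < snd (snd (js ! Suc i)))"

definition visited :: "('v \<times> 'v \<times> nat) list \<Rightarrow> 'v set" where
  "visited js = {u. \<exists>te \<in> set js. u = fst te \<or> u = fst (snd te)}"

definition explorable :: "'v set \<Rightarrow> 'v set set \<Rightarrow> ('v set \<Rightarrow> nat set) \<Rightarrow> 'v \<Rightarrow> bool" where
  "explorable V E L c \<longleftrightarrow> (\<exists>js. journey E L c c js \<and> V \<subseteq> visited js)"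

text \<open>An input instance is a list ls of label lists. It describes the temporal star on
  n = length ls + 1 vertices: center 0, leaves 1..n-1, edge {0,i} carrying the labels
  set (ls ! (i-1)).\<close>

definition star_V :: "nat list list \<Rightarrow> nat set" where
  "star_V ls = {0 .. length ls}"

definition star_E :: "nat list list \<Rightarrow> nat set set" where
  "star_E ls = {{0, i} | i. 1 \<le> i \<and> i \<le> length ls}"

definition star_L :: "nat list list \<Rightarrow> nat set \<Rightarrow> nat set" where
  "star_L ls e = (if (\<exists>i. 1 \<le> i \<and> i \<le> length ls \<and> e = {0, i})
                  then set (ls ! ((THE i. 1 \<le> i \<and> i \<le> length ls \<and> e = {0, i}) - 1)) else {})"

definition star_input :: "nat \<Rightarrow> nat list list \<Rightarrow> bool" where
  "star_input k ls \<longleftrightarrow> ls \<noteq> [] \<and>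
     (\<forall>x \<in> set ls. distinct x \<and> length x \<le> k \<and> (\<forall>l \<in> set x. 0 < l))"

datatype val = VNat nat | VNil | VCons val val

datatype exp =
    Var nat            \<comment> \<open>i-th entry of the environment (the function arguments / let-bound values)\<close>
  | Const nat
  | ENil
  | ECons exp exp
  | Hd exp
  | Tl exp
  | IsNil exp
  | Plus exp exp
  | Minus exp exp      \<comment> \<open>truncated subtraction\<close>
  | Less exp exp
  | Eq exp exp
  | If exp exp exp     \<comment> \<open>condition VNat 0 is false, any other VNat true\<close>
  | Let exp exp        \<comment> \<open>evaluates the first, pushes it on the environment\<close>
  | Call nat "exp list" \<comment> \<open>call function number f of the program with the given arguments\<close>

type_synonym prog = "exp list"

definition bool_val :: "bool \<Rightarrow> val" where
  "bool_val b = VNat (if b then 1 else 0)"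

inductive eval :: "prog \<Rightarrow> val list \<Rightarrow> exp \<Rightarrow> val \<Rightarrow> nat \<Rightarrow> bool"
  and evals :: "prog \<Rightarrow> val list \<Rightarrow> exp list \<Rightarrow> val list \<Rightarrow> nat \<Rightarrow> bool"
  for P :: prog where
  "i < length env \<Longrightarrow> eval P env (Var i) (env ! i) 1"
| "eval P env (Const n) (VNat n) 1"
| "eval P env ENil VNil 1"
| "eval P env a x t1 \<Longrightarrow> eval P env b y t2 \<Longrightarrow> eval P env (ECons a b) (VCons x y) (Suc (t1 + t2))"
| "eval P env a (VCons x y) t \<Longrightarrow> eval P env (Hd a) x (Suc t)"
| "eval P env a (VCons x y) t \<Longrightarrow> eval P env (Tl a) y (Suc t)"
| "eval P env a x t \<Longrightarrow> eval P env (IsNil a) (bool_val (x = VNil)) (Suc t)"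
| "eval P env a (VNat m) t1 \<Longrightarrow> eval P env b (VNat n) t2 \<Longrightarrow> eval P env (Plus a b) (VNat (m + n)) (Suc (t1 + t2))"
| "eval P env a (VNat m) t1 \<Longrightarrow> eval P env b (VNat n) t2 \<Longrightarrow> eval P env (Minus a b) (VNat (m - n)) (Suc (t1 + t2))"
| "eval P env a (VNat m) t1 \<Longrightarrow> eval P env b (VNat n) t2 \<Longrightarrow> eval P env (Less a b) (bool_val (m < n)) (Suc (t1 + t2))"
| "eval P env a (VNat m) t1 \<Longrightarrow> eval P env b (VNat n) t2 \<Longrightarrow> eval P env (Eq a b) (bool_val (m = n)) (Suc (t1 + t2))"
| "eval P env c (VNat m) t1 \<Longrightarrow> m \<noteq> 0 \<Longrightarrow> eval P env a x t2 \<Longrightarrow> eval P env (If c a b) x (Suc (t1 + t2))"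
| "eval P env c (VNat 0) t1 \<Longrightarrow> eval P env b x t2 \<Longrightarrow> eval P env (If c a b) x (Suc (t1 + t2))"
| "eval P env a x t1 \<Longrightarrow> eval P (x # env) b y t2 \<Longrightarrow> eval P env (Let a b) y (Suc (t1 + t2))"
| "f < length P \<Longrightarrow> evals P env as vs t1 \<Longrightarrow> eval P vs (P ! f) y t2 \<Longrightarrow> eval P env (Call f as) y (Suc (t1 + t2))"
| "evals P env [] [] 0"
| "eval P env a x t1 \<Longrightarrow> evals P env as xs t2 \<Longrightarrow> evals P env (a # as) (x # xs) (t1 + t2)"

definition run :: "prog \<Rightarrow> val \<Rightarrow> val \<Rightarrow> nat \<Rightarrow> bool" where
  "run P x v t \<longleftrightarrow> P \<noteq> [] \<and> eval P [x] (P ! 0) v t"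

definition enc_list :: "val list \<Rightarrow> val" where
  "enc_list xs = foldr VCons xs VNil"

definition enc_input :: "nat list list \<Rightarrow> val" where
  "enc_input ls = enc_list (map (\<lambda>x. enc_list (map VNat x)) ls)"

end

theory Submission
  imports Defs "HOL-Library.Multiset"
begin

fun fe :: "(nat \<Rightarrow> val list \<Rightarrow> (val \<times> nat) option) \<Rightarrow> val list \<Rightarrow> exp \<Rightarrow> (val \<times> nat) option"
and fes :: "(nat \<Rightarrow> val list \<Rightarrow> (val \<times> nat) option) \<Rightarrow> val list \<Rightarrow> exp list \<Rightarrow> (val list \<times> nat) option"
where
  "fe C env (Var i) = (if i < length env then Some (env ! i, 1) else None)"
| "fe C env (Const n) = Some (VNat n, 1)"
| "fe C env ENil = Some (VNil, 1)"
| "fe C env (ECons a b) = (case fe C env a of Some (x, t1) \<Rightarrow> (case fe C env b of Some (y, t2) \<Rightarrow> Some (VCons x y, Suc (t1 + t2)) | None \<Rightarrow> None) | None \<Rightarrow> None)"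
| "fe C env (Hd a) = (case fe C env a of Some (VCons x y, t) \<Rightarrow> Some (x, Suc t) | _ \<Rightarrow> None)"
| "fe C env (Tl a) = (case fe C env a of Some (VCons x y, t) \<Rightarrow> Some (y, Suc t) | _ \<Rightarrow> None)"
| "fe C env (IsNil a) = (case fe C env a of Some (x, t) \<Rightarrow> Some (bool_val (x = VNil), Suc t) | None \<Rightarrow> None)"
| "fe C env (Plus a b) = (case fe C env a of Some (VNat m, t1) \<Rightarrow> (case fe C env b of Some (VNat n, t2) \<Rightarrow> Some (VNat (m + n), Suc (t1 + t2)) | _ \<Rightarrow> None) | _ \<Rightarrow> None)"
| "fe C env (Minus a b) = (case fe C env a of Some (VNat m, t1) \<Rightarrow> (case fe C env b of Some (VNat n, t2) \<Rightarrow> Some (VNat (m - n), Suc (t1 + t2)) | _ \<Rightarrow> None) | _ \<Rightarrow> None)"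
| "fe C env (Less a b) = (case fe C env a of Some (VNat m, t1) \<Rightarrow> (case fe C env b of Some (VNat n, t2) \<Rightarrow> Some (bool_val (m < n), Suc (t1 + t2)) | _ \<Rightarrow> None) | _ \<Rightarrow> None)"
| "fe C env (Eq a b) = (case fe C env a of Some (VNat m, t1) \<Rightarrow> (case fe C env b of Some (VNat n, t2) \<Rightarrow> Some (bool_val (m = n), Suc (t1 + t2)) | _ \<Rightarrow> None) | _ \<Rightarrow> None)"
| "fe C env (If c a b) = (case fe C env c of Some (VNat m, t1) \<Rightarrow>
      (if m \<noteq> 0 then (case fe C env a of Some (x, t2) \<Rightarrow> Some (x, Suc (t1 + t2)) | None \<Rightarrow> None)
       else (case fe C env b of Some (x, t2) \<Rightarrow> Some (x, Suc (t1 + t2)) | None \<Rightarrow> None)) | _ \<Rightarrow> None)"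
| "fe C env (Let a b) = (case fe C env a of Some (x, t1) \<Rightarrow> (case fe C (x # env) b of Some (y, t2) \<Rightarrow> Some (y, Suc (t1 + t2)) | None \<Rightarrow> None) | None \<Rightarrow> None)"
| "fe C env (Call f as) = (case fes C env as of Some (vs, t1) \<Rightarrow> (case C f vs of Some (y, t2) \<Rightarrow> Some (y, Suc (t1 + t2)) | None \<Rightarrow> None) | None \<Rightarrow> None)"
| "fes C env [] = Some ([], 0)"
| "fes C env (a # as) = (case fe C env a of Some (x, t1) \<Rightarrow> (case fes C env as of Some (xs, t2) \<Rightarrow> Some (x # xs, t1 + t2) | None \<Rightarrow> None) | None \<Rightarrow> None)"

inductive_cases evVar: "eval P env (Var i) v t"
inductive_cases evConst: "eval P env (Const n) v t"
inductive_cases evNil: "eval P env ENil v t"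
inductive_cases evCons: "eval P env (ECons a b) v t"
inductive_cases evHd: "eval P env (Hd a) v t"
inductive_cases evTl: "eval P env (Tl a) v t"
inductive_cases evIsNil: "eval P env (IsNil a) v t"
inductive_cases evPlus: "eval P env (Plus a b) v t"
inductive_cases evMinus: "eval P env (Minus a b) v t"
inductive_cases evLess: "eval P env (Less a b) v t"
inductive_cases evEq: "eval P env (Eq a b) v t"
inductive_cases evIf: "eval P env (If c a b) v t"
inductive_cases evLet: "eval P env (Let a b) v t"
inductive_cases evCall: "eval P env (Call f as) v t"
inductive_cases evsNil: "evals P env [] vs t"
inductive_cases evsCons: "evals P env (a # as) vs t"

lemma eval_det:
  "eval P env e v t \<Longrightarrow> eval P env e v' t' \<Longrightarrow> v' = v \<and> t' = t"
  "evals P env es vs t \<Longrightarrow> evals P env es vs' t' \<Longrightarrow> vs' = vs \<and> t' = t"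
apply (induction arbitrary: v' t' and vs' t' rule: eval_evals.inducts)
  subgoal premises p using p(2) by (rule evVar) (auto)
  subgoal premises p using p(1) by (rule evConst) (auto)
  subgoal premises p using p(1) by (rule evNil) (auto)
  subgoal premises p using p(5) by (rule evCons) (auto dest!: p(2) p(4))
  subgoal premises p using p(3) by (rule evHd) (auto dest!: p(2))
  subgoal premises p using p(3) by (rule evTl) (auto dest!: p(2))
  subgoal premises p using p(3) by (rule evIsNil) (auto dest!: p(2))
  subgoal premises p using p(5) by (rule evPlus) (auto dest!: p(2) p(4))
  subgoal premises p using p(5) by (rule evMinus) (auto dest!: p(2) p(4))
  subgoal premises p using p(5) by (rule evLess) (auto dest!: p(2) p(4))
  subgoal premises p using p(5) by (rule evEq) (auto dest!: p(2) p(4))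
  subgoal premises p using p(6) by (rule evIf) (insert p(3), auto dest!: p(2) p(5))
  subgoal premises p using p(5) by (rule evIf) (auto dest!: p(2) p(4))
  subgoal premises p using p(5) by (rule evLet) (auto dest!: p(2) p(4))
  subgoal premises p using p(6) by (rule evCall) (auto dest!: p(3) p(5))
  subgoal premises p using p(1) by (rule evsNil) (auto)
  subgoal premises p using p(5) by (rule evsCons) (auto dest!: p(2) p(4))
  done

lemmas evI = eval_evals.intros[simplified]

lemma fe_sound:
  assumes Cok: "\<And>f vs y t. C f vs = Some (y, t) \<Longrightarrow> f < length P \<and> eval P vs (P ! f) y t"
  shows "fe C env e = Some (v, t) \<Longrightarrow> eval P env e v t"
proof (induction e arbitrary: env v t)
  case (Call f as)
  have "set es \<subseteq> set as \<Longrightarrow> fes C env es = Some (vs, t1) \<Longrightarrow> evals P env es vs t1" for es vs t1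
  proof (induction es arbitrary: vs t1)
    case Nil then show ?case by (auto intro: evI)
  next
    case (Cons a es)
    then show ?case using Call.IH[of a] by (auto split: option.splits intro!: evI)
  qed
  from this[of as] show ?case using Call.prems by (auto split: option.splits intro!: evI dest!: Cok)
next
  case (If c a b)
  from If.prems obtain m t1 where c: "fe C env c = Some (VNat m, t1)"
    by (auto split: option.splits val.splits)
  show ?case
  proof (cases "m = 0")
    case True
    with If.prems c obtain t2 where "fe C env b = Some (v, t2)" "t = Suc (t1 + t2)"
      by (auto split: option.splits)
    then show ?thesis using c True If.IH by (auto intro: eval_evals.intros(13))
  next
    case False
    with If.prems c obtain t2 where "fe C env a = Some (v, t2)" "t = Suc (t1 + t2)"
      by (auto split: option.splits)
    then show ?thesis using eval_evals.intros(12)[OF If.IH(1)[OF c] False If.IH(2)] by simp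
  qed
next
  case (Var i) then show ?case by (auto split: if_splits intro: evI)
next
  case (Const n) then show ?case by (auto intro: evI)
next
  case ENil then show ?case by (auto intro: evI)
next
  case (ECons a b)
  then obtain x t1 y t2 where h: "fe C env a = Some (x,t1)" "fe C env b = Some (y,t2)" "v = VCons x y" "t = Suc(t1+t2)"
    by (auto split: option.splits)
  show ?case using eval_evals.intros(4)[OF ECons.IH(1)[OF h(1)] ECons.IH(2)[OF h(2)]] h by simp
next
  case (Hd a)
  then obtain y t1 where h: "fe C env a = Some (VCons v y,t1)" "t = Suc t1"
    by (auto split: option.splits val.splits)
  show ?case using eval_evals.intros(5)[OF Hd.IH[OF h(1)]] h by simp
next
  case (Tl a)
  then obtain y t1 where h: "fe C env a = Some (VCons y v,t1)" "t = Suc t1"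
    by (auto split: option.splits val.splits)
  show ?case using eval_evals.intros(6)[OF Tl.IH[OF h(1)]] h by simp
next
  case (IsNil a)
  then obtain y t1 where h: "fe C env a = Some (y,t1)" "t = Suc t1" "v = bool_val (y = VNil)"
    by (auto split: option.splits val.splits)
  show ?case using eval_evals.intros(7)[OF IsNil.IH[OF h(1)]] h by simp
next
  case (Plus a b)
  then obtain x t1 y t2 where h: "fe C env a = Some (VNat x,t1)" "fe C env b = Some (VNat y,t2)" "v = VNat (x+y)" "t = Suc(t1+t2)"
    by (auto split: option.splits val.splits)
  show ?case using eval_evals.intros(8)[OF Plus.IH(1)[OF h(1)] Plus.IH(2)[OF h(2)]] h by simp
next
  case (Minus a b)
  then obtain x t1 y t2 where h: "fe C env a = Some (VNat x,t1)" "fe C env b = Some (VNat y,t2)" "v = VNat (x-y)" "t = Suc(t1+t2)"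
    by (auto split: option.splits val.splits)
  show ?case using eval_evals.intros(9)[OF Minus.IH(1)[OF h(1)] Minus.IH(2)[OF h(2)]] h by simp
next
  case (Less a b)
  then obtain x t1 y t2 where h: "fe C env a = Some (VNat x,t1)" "fe C env b = Some (VNat y,t2)" "v = bool_val (x<y)" "t = Suc(t1+t2)"
    by (auto split: option.splits val.splits)
  show ?case using eval_evals.intros(10)[OF Less.IH(1)[OF h(1)] Less.IH(2)[OF h(2)]] h by simp
next
  case (Eq a b)
  then obtain x t1 y t2 where h: "fe C env a = Some (VNat x,t1)" "fe C env b = Some (VNat y,t2)" "v = bool_val (x=y)" "t = Suc(t1+t2)"
    by (auto split: option.splits val.splits)
  show ?case using eval_evals.intros(11)[OF Eq.IH(1)[OF h(1)] Eq.IH(2)[OF h(2)]] h by simp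
next
  case (Let a b)
  then obtain x t1 t2 where h: "fe C env a = Some (x,t1)" "fe C (x#env) b = Some (v,t2)" "t = Suc(t1+t2)"
    by (auto split: option.splits)
  show ?case using eval_evals.intros(14)[OF Let.IH(1)[OF h(1)] Let.IH(2)[OF h(2)]] h by simp
qed


definition Cf :: "prog \<Rightarrow> nat \<Rightarrow> val list \<Rightarrow> (val \<times> nat) option" where
  "Cf P f vs = (if f < length P \<and> (\<exists>v t. eval P vs (P ! f) v t)
      then Some (SOME p. eval P vs (P ! f) (fst p) (snd p)) else None)"

lemma Cf_ok: "Cf P f vs = Some (y, t) \<Longrightarrow> f < length P \<and> eval P vs (P ! f) y t"
  unfolding Cf_def
  by (auto split: if_splits) (metis (mono_tags, lifting) fst_conv snd_conv someI)

lemma Cf_eq: "f < length P \<Longrightarrow> eval P vs (P ! f) v t \<Longrightarrow> Cf P f vs = Some (v, t)"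
proof -
  assume f: "f < length P" and e: "eval P vs (P ! f) v t"
  then obtain y t' where "Cf P f vs = Some (y, t')" unfolding Cf_def
    by (metis (no_types, lifting) prod.collapse)
  with Cf_ok[OF this] e eval_det(1) show ?thesis by blast
qed

lemma fe_eval: "fe (Cf P) env e = Some (v, t) \<Longrightarrow> eval P env e v t"
  by (rule fe_sound) (rule Cf_ok)

definition en :: "nat list \<Rightarrow> val" where "en xs = enc_list (map VNat xs)"
definition enl :: "nat list list \<Rightarrow> val" where "enl rs = enc_list (map en rs)"

lemma en_simps[simp]: "en [] = VNil" "en (x # xs) = VCons (VNat x) (en xs)"
  by (simp_all add: en_def enc_list_def)
lemma enl_simps[simp]: "enl [] = VNil" "enl (x # xs) = VCons (en x) (enl xs)"
  by (simp_all add: enl_def enc_list_def)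
lemma en_Nil_iff[simp]: "(en xs = VNil) = (xs = [])" by (cases xs) auto
lemma enl_Nil_iff[simp]: "(enl xs = VNil) = (xs = [])" by (cases xs) auto
lemma enc_input_enl: "enc_input ls = enl ls"
  by (simp add: enc_input_def enl_def en_def[abs_def])

definition b0 :: exp where "b0 = Let (Call 1 [Var 0]) (If (Call 4 [Var 0]) (Call 8 [Const 0, Call 5 [Var 0]]) (Const 0))"

definition b1 :: exp where "b1 = If (IsNil (Var 0)) ENil (ECons (Call 2 [Hd (Var 0)]) (Call 1 [Tl (Var 0)]))"

definition b2 :: exp where "b2 = If (IsNil (Var 0)) ENil (Call 3 [Hd (Var 0), Call 2 [Tl (Var 0)]])"

definition b3 :: exp where "b3 = If (IsNil (Var 1)) (ECons (Var 0) ENil)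
     (If (Less (Hd (Var 1)) (Var 0)) (ECons (Hd (Var 1)) (Call 3 [Var 0, Tl (Var 1)]))
         (ECons (Var 0) (Var 1)))"

definition b4 :: exp where "b4 = If (IsNil (Var 0)) (Const 1)
    (If (IsNil (Hd (Var 0))) (Const 0)
      (If (IsNil (Tl (Hd (Var 0)))) (Const 0) (Call 4 [Tl (Var 0)])))"

definition b5 :: exp where "b5 = If (IsNil (Var 0)) (Var 0)
    (If (IsNil (Tl (Var 0))) (Var 0)
      (Let (Call 6 [Var 0]) (Call 7 [Call 5 [Hd (Var 0)], Call 5 [Tl (Var 0)]])))"

definition b6 :: exp where "b6 = If (IsNil (Var 0)) (ECons ENil ENil)
    (Let (Call 6 [Tl (Var 0)]) (ECons (ECons (Hd (Var 1)) (Tl (Var 0))) (Hd (Var 0))))"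

definition b7 :: exp where "b7 = If (IsNil (Var 0)) (Var 1)
    (If (IsNil (Var 1)) (Var 0)
      (If (Less (Hd (Tl (Hd (Var 1)))) (Hd (Tl (Hd (Var 0)))))
          (ECons (Hd (Var 1)) (Call 7 [Var 0, Tl (Var 1)]))
          (ECons (Hd (Var 0)) (Call 7 [Tl (Var 0), Var 1]))))"

definition b8 :: exp where "b8 = If (IsNil (Var 1)) (Const 1)
    (Let (Hd (Var 1))
      (If (Less (Var 1) (Hd (Var 0))) (Call 8 [Hd (Tl (Var 0)), Tl (Var 2)])
        (If (IsNil (Tl (Tl (Var 0)))) (Const 0)
          (If (Less (Var 1) (Hd (Tl (Var 0)))) (Call 8 [Hd (Tl (Tl (Var 0))), Tl (Var 2)])
            (Const 0)))))"

definition Prog :: prog where "Prog = [b0, b1, b2, b3, b4, b5, b6, b7, b8]"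

lemma Prog_nth[simp]: "Prog ! 0 = b0" "Prog ! 1 = b1" "Prog ! Suc 0 = b1" "Prog ! 2 = b2" "Prog ! 3 = b3" "Prog ! 4 = b4" "Prog ! 5 = b5" "Prog ! 6 = b6" "Prog ! 7 = b7" "Prog ! 8 = b8"
  by (simp_all add: Prog_def)


lemma Prog_len: "length Prog = 9" by (simp add: Prog_def)


lemma fe_run: "\<exists>t. fe (Cf Prog) env e = Some (v, t) \<and> t \<le> B \<Longrightarrow> \<exists>t. eval Prog env e v t \<and> t \<le> B"
  using fe_eval by blast

lemma call_eq: "f < 9 \<Longrightarrow> eval Prog vs (Prog ! f) v t \<Longrightarrow> Cf Prog f vs = Some (v, t)"
  by (rule Cf_eq) (simp_all add: Prog_len)

lemma ins_run: "\<exists>t. eval Prog [VNat x, en ys] (Prog ! 3) (en (insort x ys)) t \<and> t \<le> 20 * length ys + 20"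
proof (induction ys)
  case Nil
  show ?case by (rule fe_run) (simp add: b3_def bool_val_def)
next
  case (Cons y ys)
  then obtain t0 where t0: "eval Prog [VNat x, en ys] (Prog ! 3) (en (insort x ys)) t0" "t0 \<le> 20 * length ys + 20"
    by blast
  note c = call_eq[OF _ t0(1), simplified]
  show ?case by (rule fe_run) (use t0(2) in \<open>simp add: b3_def bool_val_def c\<close>)
qed


lemma isort_run: "\<exists>t. eval Prog [en xs] (Prog ! 2) (en (sort xs)) t \<and> t \<le> 30 * (length xs + 1) * (length xs + 1)"
proof (induction xs)
  case Nil
  show ?case by (rule fe_run) (simp add: b2_def bool_val_def)
next
  case (Cons y ys)
  then obtain t0 where t0: "eval Prog [en ys] (Prog ! 2) (en (sort ys)) t0" "t0 \<le> 30 * (length ys + 1) * (length ys + 1)"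
    by blast
  obtain t1 where t1: "eval Prog [VNat y, en (sort ys)] (Prog ! 3) (en (insort y (sort ys))) t1" "t1 \<le> 20 * length ys + 20"
    using ins_run[of y "sort ys"] by auto
  note c = call_eq[OF _ t0(1), simplified] call_eq[OF _ t1(1), simplified]
  show ?case by (rule fe_run) (use t0(2) t1(2) in \<open>simp add: b2_def bool_val_def c algebra_simps\<close>)
qed

lemma isort3_run: "length xs \<le> 3 \<Longrightarrow> \<exists>t. eval Prog [en xs] (Prog ! 2) (en (sort xs)) t \<and> t \<le> 480"
proof -
  assume a: "length xs \<le> 3"
  have "30 * (length xs + 1) * (length xs + 1) \<le> 30 * 4 * 4"
    using a by (intro mult_mono) auto
  then show ?thesis using isort_run[of xs] by fastforce
qed

lemma mapnrm_run: "\<forall>x\<in>set ls. length x \<le> 3 \<Longrightarrow>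
  \<exists>t. eval Prog [enl ls] (Prog ! 1) (enl (map sort ls)) t \<and> t \<le> 500 * length ls + 10"
proof (induction ls)
  case Nil
  show ?case by (rule fe_run) (simp add: b1_def bool_val_def)
next
  case (Cons y ys)
  then obtain t0 where t0: "eval Prog [enl ys] (Prog ! 1) (enl (map sort ys)) t0" "t0 \<le> 500 * length ys + 10"
    by auto
  obtain t1 where t1: "eval Prog [en y] (Prog ! 2) (en (sort y)) t1" "t1 \<le> 480"
    using isort3_run[of y] Cons.prems by auto
  note c = call_eq[OF _ t0(1), simplified] call_eq[OF _ t1(1), simplified]
  show ?case by (rule fe_run) (use t0(2) t1(2) in \<open>simp add: b1_def bool_val_def c\<close>)
qed

lemma chk_run: "\<exists>t. eval Prog [enl rs] (Prog ! 4) (bool_val (\<forall>r\<in>set rs. 2 \<le> length r)) t \<and> t \<le> 30 * length rs + 10"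
proof (induction rs)
  case Nil
  show ?case by (rule fe_run) (simp add: b4_def bool_val_def)
next
  case (Cons r rs)
  then obtain t0 where t0: "eval Prog [enl rs] (Prog ! 4) (bool_val (\<forall>r\<in>set rs. 2 \<le> length r)) t0" "t0 \<le> 30 * length rs + 10"
    by auto
  note c = call_eq[OF _ t0(1), simplified]
  show ?case
  proof (cases r)
    case Nil
    then show ?thesis by (intro fe_run) (simp add: b4_def bool_val_def)
  next
    case (Cons x r')
    then show ?thesis
    proof (cases r')
      case Nil
      then show ?thesis using \<open>r = x # r'\<close> by (intro fe_run) (simp add: b4_def bool_val_def)
    next
      case (Cons y r'')
      then show ?thesis using \<open>r = x # r'\<close> t0(2) by (intro fe_run) (simp add: b4_def bool_val_def c)
    qed
  qed
qed

fun grI :: "nat \<Rightarrow> nat list list \<Rightarrow> bool" where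
  "grI T [] = True"
| "grI T ((x # y # zs) # rs) = (if T < x then grI y rs else
     (case zs of [] \<Rightarrow> False | z # _ \<Rightarrow> (if T < y then grI z rs else False)))"
| "grI T (_ # rs) = False"

lemma scan_run: "\<forall>r\<in>set rs. 2 \<le> length r \<Longrightarrow>
  \<exists>t. eval Prog [VNat T, enl rs] (Prog ! 8) (bool_val (grI T rs)) t \<and> t \<le> 50 * length rs + 10"
proof (induction rs arbitrary: T)
  case Nil
  show ?case by (rule fe_run) (simp add: b8_def bool_val_def)
next
  case (Cons r rs)
  then obtain x y zs where r: "r = x # y # zs" by (cases r rule: remdups_adj.cases) auto
  have IH: "\<exists>t. eval Prog [VNat T', enl rs] (Prog ! 8) (bool_val (grI T' rs)) t \<and> t \<le> 50 * length rs + 10" for T'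
    using Cons by auto
  obtain t0 where t0: "eval Prog [VNat y, enl rs] (Prog ! 8) (bool_val (grI y rs)) t0" "t0 \<le> 50 * length rs + 10"
    using IH by blast
  note c = call_eq[OF _ t0(1), simplified]
  show ?case
  proof (cases "T < x")
    case True
    then show ?thesis using r t0(2) by (intro fe_run) (simp add: b8_def bool_val_def c)
  next
    case False
    show ?thesis
    proof (cases zs)
      case Nil
      then show ?thesis using r False by (intro fe_run) (simp add: b8_def bool_val_def)
    next
      case (Cons z zs')
      obtain t1 where t1: "eval Prog [VNat z, enl rs] (Prog ! 8) (bool_val (grI z rs)) t1" "t1 \<le> 50 * length rs + 10"
        using IH by blast
      note c1 = call_eq[OF _ t1(1), simplified]
      show ?thesis using r False Cons t1(2) by (intro fe_run) (simp add: b8_def bool_val_def c1)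
    qed
  qed
qed

fun splitI :: "'a list \<Rightarrow> 'a list \<times> 'a list" where
  "splitI [] = ([], [])"
| "splitI (x # xs) = (case splitI xs of (a, b) \<Rightarrow> (x # b, a))"

lemma splitI_len: "splitI xs = (a, b) \<Longrightarrow> length a = (length xs + 1) div 2 \<and> length b = length xs div 2"
  by (induction xs arbitrary: a b) (auto split: prod.splits)

lemma splitI_mset: "splitI xs = (a, b) \<Longrightarrow> mset xs = mset a + mset b"
  by (induction xs arbitrary: a b) (auto split: prod.splits)

definition key :: "nat list \<Rightarrow> nat" where "key r = hd (tl r)"

fun mergeI :: "nat list list \<Rightarrow> nat list list \<Rightarrow> nat list list" where
  "mergeI [] ys = ys"
| "mergeI xs [] = xs"
| "mergeI (x # xs) (y # ys) = (if key y < key x then y # mergeI (x # xs) ys else x # mergeI xs (y # ys))"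

lemma mergeI_mset: "mset (mergeI xs ys) = mset xs + mset ys"
  by (induction xs ys rule: mergeI.induct) auto

lemma mergeI_set: "set (mergeI xs ys) = set xs \<union> set ys"
  by (metis mergeI_mset set_mset_mset set_mset_union)

lemma mergeI_sorted:
  "sorted_wrt (\<lambda>r s. key r \<le> key s) xs \<Longrightarrow> sorted_wrt (\<lambda>r s. key r \<le> key s) ys \<Longrightarrow>
   sorted_wrt (\<lambda>r s. key r \<le> key s) (mergeI xs ys)"
  by (induction xs ys rule: mergeI.induct) (auto simp: mergeI_set)

function msortI :: "nat list list \<Rightarrow> nat list list" where
  "msortI xs = (if length xs \<le> 1 then xs else (case splitI xs of (a, b) \<Rightarrow> mergeI (msortI a) (msortI b)))"
  by pat_completeness auto
termination
  by (relation "measure length") (auto dest!: splitI_len[OF sym])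

declare msortI.simps[simp del]

lemma msortI_mset: "mset (msortI xs) = mset xs"
proof (induction xs rule: msortI.induct)
  case (1 xs)
  then show ?case
    by (subst msortI.simps) (auto split: prod.splits simp: mergeI_mset splitI_mset)
qed

lemma msortI_sorted: "sorted_wrt (\<lambda>r s. key r \<le> key s) (msortI xs)"
proof (induction xs rule: msortI.induct)
  case (1 xs)
  then show ?case
  proof (cases "length xs \<le> 1")
    case True
    then show ?thesis by (subst msortI.simps) (cases xs; auto)
  next
    case False
    then show ?thesis using 1
      by (subst msortI.simps) (auto split: prod.splits intro!: mergeI_sorted)
  qed
qed

fun clog :: "nat \<Rightarrow> nat" where
  "clog n = (if n \<le> 1 then 0 else Suc (clog ((n + 1) div 2)))"

declare clog.simps[simp del]

lemma clog_mono: "m \<le> n \<Longrightarrow> clog m \<le> clog n"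
proof (induction n arbitrary: m rule: less_induct)
  case (less n)
  show ?case
  proof (cases "m \<le> 1")
    case True
    then show ?thesis by (simp add: clog.simps)
  next
    case False
    then have "clog ((m + 1) div 2) \<le> clog ((n + 1) div 2)"
      using less by (intro less.IH) auto
    then show ?thesis using False less.prems by (subst (1 2) clog.simps) auto
  qed
qed

lemma clog_pow: "2 \<le> n \<Longrightarrow> 2 ^ clog n \<le> 2 * n - 2"
proof (induction n rule: less_induct)
  case (less n)
  show ?case
  proof (cases "(n + 1) div 2 \<le> 1")
    case True
    then have "n = 2" using less.prems by auto
    then show ?thesis by (simp add: clog.simps)
  next
    case False
    then have "2 ^ clog ((n + 1) div 2) \<le> 2 * ((n + 1) div 2) - 2"
      using less by (intro less.IH) auto
    then show ?thesis using less.prems by (subst clog.simps) auto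
  qed
qed

lemma split_run: "\<exists>t. eval Prog [enl xs] (Prog ! 6) (case splitI xs of (a, b) \<Rightarrow> VCons (enl a) (enl b)) t \<and> t \<le> 20 * length xs + 10"
proof (induction xs)
  case Nil
  show ?case by (rule fe_run) (simp add: b6_def bool_val_def)
next
  case (Cons y ys)
  then obtain t0 where t0: "eval Prog [enl ys] (Prog ! 6) (case splitI ys of (a, b) \<Rightarrow> VCons (enl a) (enl b)) t0" "t0 \<le> 20 * length ys + 10"
    by blast
  obtain a b where ab: "splitI ys = (a, b)" by fastforce
  note c = call_eq[OF _ t0(1), simplified ab, simplified]
  show ?case by (rule fe_run) (use t0(2) in \<open>simp add: b6_def bool_val_def c ab\<close>)
qed

lemma merge_run: "\<forall>r\<in>set xs \<union> set ys. 2 \<le> length r \<Longrightarrow>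
  \<exists>t. eval Prog [enl xs, enl ys] (Prog ! 7) (enl (mergeI xs ys)) t \<and> t \<le> 40 * (length xs + length ys) + 10"
proof (induction xs ys rule: mergeI.induct)
  case (1 ys)
  show ?case by (rule fe_run) (simp add: b7_def bool_val_def)
next
  case (2 x xs)
  show ?case by (rule fe_run) (simp add: b7_def bool_val_def)
next
  case (3 x xs y ys)
  obtain x1 x2 xr where x: "x = x1 # x2 # xr" using 3(3) by (cases x rule: remdups_adj.cases) auto
  obtain y1 y2 yr where y: "y = y1 # y2 # yr" using 3(3) by (cases y rule: remdups_adj.cases) auto
  show ?case
  proof (cases "key y < key x")
    case True
    obtain t0 where t0: "eval Prog [enl (x # xs), enl ys] (Prog ! 7) (enl (mergeI (x # xs) ys)) t0" "t0 \<le> 40 * (length (x # xs) + length ys) + 10"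
      using 3(1)[OF True] 3(3) by auto
    note c = call_eq[OF _ t0(1), unfolded x y, simplified]
    show ?thesis using True t0(2) x y
      by (intro fe_run) (simp add: b7_def bool_val_def key_def c)
  next
    case False
    obtain t0 where t0: "eval Prog [enl xs, enl (y # ys)] (Prog ! 7) (enl (mergeI xs (y # ys))) t0" "t0 \<le> 40 * (length xs + length (y # ys)) + 10"
      using 3(2)[OF False] 3(3) by auto
    note c = call_eq[OF _ t0(1), unfolded x y, simplified]
    show ?thesis using False t0(2) x y
      by (intro fe_run) (simp add: b7_def bool_val_def key_def c)
  qed
qed


lemma msortI_set: "set (msortI xs) = set xs"
  by (metis msortI_mset set_mset_mset)

lemma msort_arith:
  fixes n h1 h2 c1 c2 ts tm ta tb :: nat
  assumes "2 \<le> n" "h1 + h2 = n" "clog h2 \<le> clog h1" "clog n = Suc (clog h1)"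
    "ts \<le> 20 * n + 10" "tm \<le> 40 * n + 10" "ta \<le> 100 * h1 * clog h1 + 20" "tb \<le> 100 * h2 * clog h2 + 20"
  shows "ts + ta + tb + tm + 30 \<le> 100 * n * clog n + 20"
proof -
  have "h2 * clog h2 \<le> h2 * clog h1" using assms(3) by (rule mult_left_mono) simp
  moreover have "n * clog h1 = h1 * clog h1 + h2 * clog h1" using assms(2) by (metis add_mult_distrib)
  ultimately have "h1 * clog h1 + h2 * clog h2 \<le> n * clog h1" by linarith
  moreover have "n * clog n = n * clog h1 + n" using assms(4) by simp
  ultimately show ?thesis using assms by linarith
qed

lemma msort_run: "\<forall>r\<in>set xs. 2 \<le> length r \<Longrightarrow>
  \<exists>t. eval Prog [enl xs] (Prog ! 5) (enl (msortI xs)) t \<and> t \<le> 100 * length xs * clog (length xs) + 20"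
proof (induction xs rule: msortI.induct)
  case (1 xs)
  show ?case
  proof (cases "length xs \<le> 1")
    case True
    then have "xs = [] \<or> (\<exists>r. xs = [r])" by (cases xs) auto
    moreover have "msortI xs = xs" using True by (subst msortI.simps) simp
    ultimately show ?thesis by (elim disjE exE) (intro fe_run; simp add: b5_def bool_val_def)+
  next
    case False
    obtain a b where ab: "splitI xs = (a, b)" by fastforce
    have ms: "msortI xs = mergeI (msortI a) (msortI b)" using False ab by (subst msortI.simps) simp
    have len: "length a = (length xs + 1) div 2" "length b = length xs div 2" using splitI_len[OF ab] by auto
    have sa: "set a \<subseteq> set xs" "set b \<subseteq> set xs" using splitI_mset[OF ab]
      by (metis Un_iff set_mset_mset set_mset_union subsetI)+
    obtain ta where ta: "eval Prog [enl a] (Prog ! 5) (enl (msortI a)) ta" "ta \<le> 100 * length a * clog (length a) + 20"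
      using 1(1)[OF False ab[symmetric]] 1(3) sa by auto
    obtain tb where tb: "eval Prog [enl b] (Prog ! 5) (enl (msortI b)) tb" "tb \<le> 100 * length b * clog (length b) + 20"
      using 1(2)[OF False ab[symmetric]] 1(3) sa by auto
    obtain ts where ts: "eval Prog [enl xs] (Prog ! 6) (VCons (enl a) (enl b)) ts" "ts \<le> 20 * length xs + 10"
      using split_run[of xs] ab by auto
    obtain tm where tm: "eval Prog [enl (msortI a), enl (msortI b)] (Prog ! 7) (enl (mergeI (msortI a) (msortI b))) tm"
      "tm \<le> 40 * (length (msortI a) + length (msortI b)) + 10"
      using merge_run[of "msortI a" "msortI b"] 1(3) sa by (auto simp: msortI_set)
    have lm: "length (msortI a) = length a" "length (msortI b) = length b"
      by (metis msortI_mset size_mset)+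
    obtain r1 r2 rest where xs: "xs = r1 # r2 # rest" using False by (cases xs rule: remdups_adj.cases) auto
    have cl: "clog (length xs) = Suc (clog (length a))" using False len by (subst clog.simps) simp
    have hs: "length a + length b = length xs" using len by presburger
    have cm: "clog (length b) \<le> clog (length a)" using len by (intro clog_mono) auto
    have tm': "tm \<le> 40 * length xs + 10" using tm(2) lm hs by simp
    have ar: "ts + ta + tb + tm + 30 \<le> 100 * length xs * clog (length xs) + 20"
      by (rule msort_arith[OF _ hs cm cl ts(2) tm' ta(2) tb(2)]) (use False in linarith)
    note c = call_eq[OF _ ta(1), simplified] call_eq[OF _ tb(1), simplified]
      call_eq[OF _ ts(1), unfolded xs, simplified] call_eq[OF _ tm(1), simplified]
    show ?thesis unfolding ms using ar
      by (intro fe_run) (simp add: xs b5_def bool_val_def c)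
  qed
qed


lemma main_run:
  assumes "\<forall>x\<in>set ls. length x \<le> 3"
  shows "\<exists>t. eval Prog [enl ls] (Prog ! 0)
     (bool_val ((\<forall>r\<in>set (map sort ls). 2 \<le> length r) \<and> grI 0 (msortI (map sort ls)))) t \<and>
     t \<le> 100 * length ls * clog (length ls) + 600 * length ls + 100"
proof -
  let ?rs = "map sort ls"
  obtain t1 where t1: "eval Prog [enl ls] (Prog ! 1) (enl ?rs) t1" "t1 \<le> 500 * length ls + 10"
    using mapnrm_run[OF assms] by blast
  obtain t2 where t2: "eval Prog [enl ?rs] (Prog ! 4) (bool_val (\<forall>r\<in>set ?rs. 2 \<le> length r)) t2" "t2 \<le> 30 * length ?rs + 10"
    using chk_run[of ?rs] by blast
  note c = call_eq[OF _ t1(1), simplified] call_eq[OF _ t2(1), simplified]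
  show ?thesis
  proof (cases "\<forall>r\<in>set ?rs. 2 \<le> length r")
    case False
    then have F: "(\<forall>r\<in>set ls. 2 \<le> length r) = False" by simp
    show ?thesis using t1(2) t2(2)
      by (intro fe_run) (simp add: b0_def bool_val_def c F)
  next
    case True
    obtain t3 where t3: "eval Prog [enl ?rs] (Prog ! 5) (enl (msortI ?rs)) t3" "t3 \<le> 100 * length ?rs * clog (length ?rs) + 20"
      using msort_run[OF True] by blast
    have T2: "\<forall>r\<in>set (msortI ?rs). 2 \<le> length r" using True by (simp only: msortI_set)
    obtain t4 where t4: "eval Prog [VNat 0, enl (msortI ?rs)] (Prog ! 8) (bool_val (grI 0 (msortI ?rs))) t4"
      "t4 \<le> 50 * length (msortI ?rs) + 10"
      using scan_run[OF T2] by blast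
    have lm: "length (msortI ?rs) = length ls" by (metis length_map msortI_mset size_mset)
    note c2 = call_eq[OF _ t3(1), simplified] call_eq[OF _ t4(1), simplified]
    have F: "(\<forall>r\<in>set ls. 2 \<le> length r) = True" using True by simp
    show ?thesis using t1(2) t2(2) t3(2) t4(2) lm
      by (intro fe_run) (simp add: b0_def bool_val_def c c2 F)
  qed
qed

lemma doubleton_0: "1 \<le> i \<Longrightarrow> {u, v} = {0, i} \<longleftrightarrow> (u = 0 \<and> v = i) \<or> (u = i \<and> v = (0::nat))"
  by (auto simp: doubleton_eq_iff)

lemma star_L_leaf: "1 \<le> i \<Longrightarrow> i \<le> length ls \<Longrightarrow> star_L ls {0, i} = set (ls ! (i - 1))"
proof -
  assume a: "1 \<le> i" "i \<le> length ls"
  have "(THE j. 1 \<le> j \<and> j \<le> length ls \<and> {0, i} = {0, j}) = i"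
    using a by (intro the_equality) (auto simp: doubleton_eq_iff)
  then show ?thesis using a unfolding star_L_def by auto
qed

lemma time_edge_star:
  "time_edge (star_E ls) (star_L ls) (u, v, l) \<longleftrightarrow>
   (\<exists>i. 1 \<le> i \<and> i \<le> length ls \<and> ((u = 0 \<and> v = i) \<or> (u = i \<and> v = 0)) \<and> l \<in> set (ls ! (i - 1)))"
proof
  assume "time_edge (star_E ls) (star_L ls) (u, v, l)"
  then obtain i where i: "1 \<le> i" "i \<le> length ls" "{u, v} = {0, i}" "l \<in> star_L ls {u, v}"
    unfolding time_edge_def star_E_def by auto
  then show "\<exists>i. 1 \<le> i \<and> i \<le> length ls \<and> ((u = 0 \<and> v = i) \<or> (u = i \<and> v = 0)) \<and> l \<in> set (ls ! (i - 1))"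
  proof -
    have "l \<in> set (ls ! (i - 1))" using i(4) star_L_leaf[OF i(1,2)] unfolding i(3) by simp
    then show ?thesis using i doubleton_0[OF i(1)] by blast
  qed
next
  assume "\<exists>i. 1 \<le> i \<and> i \<le> length ls \<and> ((u = 0 \<and> v = i) \<or> (u = i \<and> v = 0)) \<and> l \<in> set (ls ! (i - 1))"
  then obtain i where i: "1 \<le> i" "i \<le> length ls" "(u = 0 \<and> v = i) \<or> (u = i \<and> v = 0)" "l \<in> set (ls ! (i - 1))"
    by blast
  then have e: "{u, v} = {0, i}" by auto
  show "time_edge (star_E ls) (star_L ls) (u, v, l)"
    unfolding time_edge_def star_E_def using i e star_L_leaf[OF i(1,2)] by auto
qed

lemma journey_single: "time_edge E L (u, v, l) \<Longrightarrow> journey E L u v [(u, v, l)]"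
  unfolding journey_def by auto

lemma journey_cons:
  assumes "time_edge E L (u, w, l)" "journey E L w v js" "l < snd (snd (js ! 0))"
  shows "journey E L u v ((u, w, l) # js)"
  using assms unfolding journey_def
  by (auto simp: nth_Cons split: nat.splits)

lemma journey_mono:
  assumes "journey E L u v js" "i < j" "j < length js"
  shows "snd (snd (js ! i)) < snd (snd (js ! j))"
  using assms(2,3)
proof (induction j)
  case 0 then show ?case by simp
next
  case (Suc j)
  have "snd (snd (js ! j)) < snd (snd (js ! Suc j))" using assms(1) Suc.prems unfolding journey_def by auto
  then show ?case using Suc by (cases "i = j") auto
qed

lemma visited_Cons: "visited (te # js) = {fst te, fst (snd te)} \<union> visited js"
  unfolding visited_def by auto


lemma strict_sort: "distinct xs \<Longrightarrow> sorted_wrt (<) (sort xs)"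
  by (simp add: strict_sorted_iff)

lemma build:
  "grI T (map (\<lambda>i. sort (ls ! i)) xs) \<Longrightarrow> xs \<noteq> [] \<Longrightarrow> \<forall>i\<in>set xs. i < length ls \<and> distinct (ls ! i) \<Longrightarrow>
   \<exists>js. journey (star_E ls) (star_L ls) 0 0 js \<and> T < snd (snd (js ! 0)) \<and> Suc ` set xs \<subseteq> visited js"
proof (induction xs arbitrary: T)
  case Nil then show ?case by simp
next
  case (Cons i xs)
  let ?r = "sort (ls ! i)"
  have il: "i < length ls" "distinct (ls ! i)" using Cons.prems(3) by auto
  have ss: "sorted_wrt (<) ?r" using strict_sort[OF il(2)] .
  have ok: "grI T (?r # map (\<lambda>i. sort (ls ! i)) xs)" using Cons.prems(1) by simp
  obtain x y zs where r: "?r = x # y # zs"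
    using ok by (cases ?r rule: remdups_adj.cases) auto
  have setr: "set ?r = set (ls ! i)" by simp
  have "\<exists>a b. T < a \<and> a < b \<and> a \<in> set (ls ! i) \<and> b \<in> set (ls ! i) \<and> grI b (map (\<lambda>i. sort (ls ! i)) xs)"
  proof (cases "T < x")
    case True
    then show ?thesis using ok r ss setr
      by (intro exI[of _ x] exI[of _ y]) (auto simp del: set_sort)
  next
    case False
    then obtain z zs' where zs: "zs = z # zs'" "T < y" "grI z (map (\<lambda>i. sort (ls ! i)) xs)"
      using ok r by (auto split: list.splits if_splits)
    then show ?thesis using r ss setr
      by (intro exI[of _ y] exI[of _ z]) (auto simp del: set_sort)
  qed
  then obtain a b where ab: "T < a" "a < b" "a \<in> set (ls ! i)" "b \<in> set (ls ! i)"
    "grI b (map (\<lambda>i. sort (ls ! i)) xs)" by blast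
  have te1: "time_edge (star_E ls) (star_L ls) (0, Suc i, a)"
    unfolding time_edge_star using il ab by (intro exI[of _ "Suc i"]) auto
  have te2: "time_edge (star_E ls) (star_L ls) (Suc i, 0, b)"
    unfolding time_edge_star using il ab by (intro exI[of _ "Suc i"]) auto
  show ?case
  proof (cases "xs = []")
    case True
    have "journey (star_E ls) (star_L ls) 0 0 [(0, Suc i, a), (Suc i, 0, b)]"
      by (rule journey_cons[OF te1 journey_single[OF te2]]) (use ab in simp)
    then show ?thesis using True ab by (intro exI[of _ "[(0, Suc i, a), (Suc i, 0, b)]"]) (auto simp: visited_Cons)
  next
    case False
    obtain js where js: "journey (star_E ls) (star_L ls) 0 0 js" "b < snd (snd (js ! 0))" "Suc ` set xs \<subseteq> visited js"
      using Cons.IH[OF ab(5) False] Cons.prems(3) by auto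
    have "journey (star_E ls) (star_L ls) 0 0 ((0, Suc i, a) # (Suc i, 0, b) # js)"
      by (rule journey_cons[OF te1 journey_cons[OF te2 js(1) js(2)]]) (use ab in simp)
    then show ?thesis using js ab by (intro exI[of _ "(0, Suc i, a) # (Suc i, 0, b) # js"]) (auto simp: visited_Cons)
  qed
qed

lemma extract_visit:
  assumes j: "journey (star_E ls) (star_L ls) 0 0 js" and v: "Suc i \<in> visited js"
  shows "\<exists>k. Suc k < length js \<and> fst (js ! k) = 0 \<and> fst (snd (js ! k)) = Suc i"
proof -
  have te: "\<And>k. k < length js \<Longrightarrow> time_edge (star_E ls) (star_L ls) (js ! k)"
    using j unfolding journey_def by auto
  have te': "\<And>k. k < length js \<Longrightarrow> (fst (js ! k) = 0 \<and> fst (snd (js ! k)) \<noteq> 0) \<or> (fst (js ! k) \<noteq> 0 \<and> fst (snd (js ! k)) = 0)"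
  proof -
    fix k assume "k < length js"
    from te[OF this] show "?thesis k"
      by (cases "js ! k") (auto simp: time_edge_star)
  qed
  have ne: "js \<noteq> []" and f0: "fst (js ! 0) = 0" and last0: "fst (snd (js ! (length js - 1))) = 0"
    using j unfolding journey_def by auto
  have ch: "\<And>k. Suc k < length js \<Longrightarrow> fst (snd (js ! k)) = fst (js ! Suc k)"
    using j unfolding journey_def by auto
  from v obtain k where k: "k < length js" "fst (js ! k) = Suc i \<or> fst (snd (js ! k)) = Suc i"
    unfolding visited_def by (auto simp: in_set_conv_nth)
  show ?thesis
  proof (cases "fst (snd (js ! k)) = Suc i")
    case True
    have "Suc k < length js"
    proof (rule ccontr)
      assume "\<not> Suc k < length js"
      then have "k = length js - 1" using k by auto
      then show False using True last0 by simp
    qed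
    moreover have "fst (js ! k) = 0" using te'[OF k(1)] True by auto
    ultimately show ?thesis using True by blast
  next
    case False
    then have a: "fst (js ! k) = Suc i" using k by auto
    then obtain k' where k': "k = Suc k'" using f0 by (cases k) auto
    have "fst (snd (js ! k')) = Suc i" using ch[of k'] k k' a by simp
    moreover have "fst (js ! k') = 0" using te'[of k'] k k' calculation by auto
    ultimately show ?thesis using k k' by blast
  qed
qed

lemma sched_exists:
  assumes j: "journey (star_E ls) (star_L ls) 0 0 js" and v: "\<forall>i < length ls. Suc i \<in> visited js"
  shows "\<exists>a b. (\<forall>i < length ls. a i < b i \<and> a i \<in> set (ls ! i) \<and> b i \<in> set (ls ! i)) \<and>
     (\<forall>i < length ls. \<forall>i' < length ls. i \<noteq> i' \<longrightarrow> b i < a i' \<or> b i' < a i)"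
proof -
  define K where "K i = (SOME k. Suc k < length js \<and> fst (js ! k) = 0 \<and> fst (snd (js ! k)) = Suc i)" for i
  have K: "Suc (K i) < length js \<and> fst (js ! K i) = 0 \<and> fst (snd (js ! K i)) = Suc i" if "i < length ls" for i
  proof -
    have "\<exists>k. Suc k < length js \<and> fst (js ! k) = 0 \<and> fst (snd (js ! k)) = Suc i"
      using extract_visit[OF j] v that by blast
    then show ?thesis unfolding K_def by (rule someI_ex)
  qed
  define a where "a i = snd (snd (js ! K i))" for i
  define b where "b i = snd (snd (js ! Suc (K i)))" for i
  have te: "\<And>k. k < length js \<Longrightarrow> time_edge (star_E ls) (star_L ls) (js ! k)"
    using j unfolding journey_def by auto
  have ch: "\<And>k. Suc k < length js \<Longrightarrow> fst (snd (js ! k)) = fst (js ! Suc k) \<and> snd (snd (js ! k)) < snd (snd (js ! Suc k))"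
    using j unfolding journey_def by auto
  have P1: "a i < b i \<and> a i \<in> set (ls ! i) \<and> b i \<in> set (ls ! i)" if i: "i < length ls" for i
  proof -
    have k: "Suc (K i) < length js" "fst (js ! K i) = 0" "fst (snd (js ! K i)) = Suc i" using K[OF i] by auto
    have ab: "a i < b i" using ch[OF k(1)] unfolding a_def b_def by simp
    obtain u w l where e1: "js ! K i = (u, w, l)" by (cases "js ! K i")
    have "time_edge (star_E ls) (star_L ls) (u, w, l)" using te k(1) e1 by (metis Suc_lessD)
    then obtain p where p: "1 \<le> p" "(u = 0 \<and> w = p) \<or> (u = p \<and> w = 0)" "l \<in> set (ls ! (p - 1))"
      unfolding time_edge_star by blast
    have "p = Suc i" using p(2) k(2,3) e1 p(1) by auto
    then have A: "a i \<in> set (ls ! i)" using p(3) e1 unfolding a_def by simp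
    obtain u' w' l' where e2: "js ! Suc (K i) = (u', w', l')" by (cases "js ! Suc (K i)")
    have u': "u' = Suc i" using ch[OF k(1)] k e2 by simp
    have "time_edge (star_E ls) (star_L ls) (u', w', l')" using te k(1) e2 by metis
    then obtain q where q: "1 \<le> q" "(u' = 0 \<and> w' = q) \<or> (u' = q \<and> w' = 0)" "l' \<in> set (ls ! (q - 1))"
      unfolding time_edge_star by blast
    have "q = Suc i" using q(2) u' by auto
    then have B: "b i \<in> set (ls ! i)" using q(3) e2 unfolding b_def by simp
    show ?thesis using ab A B by blast
  qed
  have P2: "b i < a i' \<or> b i' < a i" if i: "i < length ls" "i' < length ls" "i \<noteq> i'" for i i'
  proof -
    have neq: "K i \<noteq> K i'" using K[OF i(1)] K[OF i(2)] i(3) by auto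
    have gen: "b p < a q" if "p < length ls" "q < length ls" "K p < K q" for p q
    proof -
      have kp: "Suc (K p) < length js" "fst (js ! K p) = 0" "fst (snd (js ! K p)) = Suc p" using K[OF that(1)] by auto
      have kq: "Suc (K q) < length js" "fst (js ! K q) = 0" using K[OF that(2)] by auto
      have "fst (js ! Suc (K p)) = Suc p" using ch[OF kp(1)] kp by simp
      then have "Suc (K p) \<noteq> K q" using kq by auto
      then have "Suc (K p) < K q" using that(3) by auto
      then have "snd (snd (js ! Suc (K p))) < snd (snd (js ! K q))" by (rule journey_mono[OF j _ Suc_lessD[OF kq(1)]])
      then show ?thesis unfolding a_def b_def .
    qed
    show ?thesis
    proof (cases "K i < K i'")
      case True then show ?thesis using gen[OF i(1,2)] by blast
    next
      case False then have "K i' < K i" using neq by linarith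
      then show ?thesis using gen[OF i(2,1)] by blast
    qed
  qed
  show ?thesis using P1 P2 by blast
qed

lemma len23:
  assumes "sorted_wrt (<) r" "2 \<le> length r" "length r \<le> 3"
  shows "(\<exists>x y. r = [x, y] \<and> x < y) \<or> (\<exists>x y z. r = [x, y, z] \<and> x < y \<and> y < z)"
proof -
  obtain x y zs where r: "r = x # y # zs" using assms(2) by (cases r rule: remdups_adj.cases) auto
  show ?thesis
  proof (cases zs)
    case Nil then show ?thesis using assms(1) r by auto
  next
    case (Cons z zs')
    then have "zs' = []" using assms(3) r by auto
    then show ?thesis using assms(1) r Cons by auto
  qed
qed

lemma pin:
  assumes "sorted_wrt (<) r" "2 \<le> length r" "length r \<le> 3" "a < b" "a \<in> set r" "b \<in> set r"
  shows "a \<le> key r \<and> key r \<le> b"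
  using len23[OF assms(1-3)] assms(4-6) by (auto simp: key_def)

lemma greedy_ok:
  assumes "distinct xs"
    and "\<forall>i\<in>set xs. sorted_wrt (<) (R i) \<and> 2 \<le> length (R i) \<and> length (R i) \<le> 3 \<and> a i < b i \<and> a i \<in> set (R i) \<and> b i \<in> set (R i)"
    and "\<forall>i\<in>set xs. \<forall>j\<in>set xs. i \<noteq> j \<longrightarrow> b i < a j \<or> b j < a i"
    and "sorted_wrt (\<lambda>i j. key (R i) \<le> key (R j)) xs"
    and "\<forall>i\<in>set xs. T < a i"
  shows "grI T (map R xs)"
  using assms
proof (induction xs arbitrary: T)
  case Nil then show ?case by simp
next
  case (Cons i xs)
  have Ri: "sorted_wrt (<) (R i)" "2 \<le> length (R i)" "length (R i) \<le> 3" "a i < b i" "a i \<in> set (R i)" "b i \<in> set (R i)"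
    using Cons.prems(2) by auto
  have later: "b i < a j" if j: "j \<in> set xs" for j
  proof -
    have ij: "i \<noteq> j" using Cons.prems(1) j by auto
    have kij: "key (R i) \<le> key (R j)" using Cons.prems(4) j by auto
    have pi: "a i \<le> key (R i) \<and> key (R i) \<le> b i" using pin[OF Ri] .
    have pj: "a j \<le> key (R j) \<and> key (R j) \<le> b j" using pin Cons.prems(2) j by auto
    have "b i < a j \<or> b j < a i" using Cons.prems(3) j ij by auto
    then show ?thesis using pi pj kij by auto
  qed
  have IH: "grI T' (map R xs)" if "T' \<le> b i" for T'
  proof -
    have "\<forall>j\<in>set xs. T' < a j" using later that le_less_trans by blast
    then show ?thesis using Cons.prems by (intro Cons.IH) auto
  qed
  have Ta: "T < a i" using Cons.prems(5) by auto
  show ?case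
  proof (cases "length (R i) = 2")
    case True
    then obtain x y where r: "R i = [x, y]" "x < y" using len23[OF Ri(1-3)] by auto
    then have "a i = x" "b i = y" using Ri(4-6) by auto
    then show ?thesis using r Ta IH[of y] by simp
  next
    case False
    then obtain x y z where r: "R i = [x, y, z]" "x < y" "y < z" using len23[OF Ri(1-3)] by auto
    show ?thesis
    proof (cases "T < x")
      case True
      have "y \<le> b i" using Ri(4-6) r by auto
      then show ?thesis using r True IH[of y] by simp
    next
      case False
      then have "a i = y" "b i = z" using Ri(4-6) r Ta by auto
      then show ?thesis using r False Ta IH[of z] by simp
    qed
  qed
qed

lemma mset_map_obtain: "mset (map f ys) = mset qs \<Longrightarrow> \<exists>xs. mset xs = mset ys \<and> map f xs = qs"
proof (induction qs arbitrary: ys)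
  case Nil then show ?case by simp
next
  case (Cons q qs)
  have "q \<in># mset (map f ys)" using Cons.prems by simp
  then obtain y where y: "y \<in> set ys" "f y = q" by auto
  have "mset (map f (remove1 y ys)) = mset qs"
    using Cons.prems y by (simp add: mset_remove1 image_mset_Diff)
  then obtain xs where xs: "mset xs = mset (remove1 y ys)" "map f xs = qs" using Cons.IH by blast
  have "mset (y # xs) = mset ys" using xs(1) y(1) by (simp add: mset_remove1)
  then show ?case using xs y by (intro exI[of _ "y # xs"]) auto
qed


lemma explorable_iff:
  assumes inp: "star_input 3 ls"
  shows "explorable (star_V ls) (star_E ls) (star_L ls) 0 \<longleftrightarrow>
    (\<forall>r\<in>set (map sort ls). 2 \<le> length r) \<and> grI 0 (msortI (map sort ls))"
proof -
  define R where "R i = sort (ls ! i)" for i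
  define m where "m = length ls"
  have ne: "ls \<noteq> []" and li: "\<And>i. i < m \<Longrightarrow> distinct (ls ! i) \<and> length (ls ! i) \<le> 3 \<and> (\<forall>l\<in>set (ls ! i). 0 < l)"
    using inp unfolding star_input_def m_def by (auto dest: nth_mem)
  have mapR: "map R [0..<m] = map sort ls"
    unfolding R_def m_def by (rule nth_equalityI) auto
  have "mset (map R [0..<m]) = mset (msortI (map sort ls))" using msortI_mset mapR by simp
  then obtain xs where xs: "mset xs = mset [0..<m]" "map R xs = msortI (map sort ls)"
    using mset_map_obtain by blast
  have setxs: "set xs = {0..<m}" using mset_eq_setD[OF xs(1)] by simp
  have lenxs: "length xs = m" using mset_eq_length[OF xs(1)] by simp
  have dxs: "distinct xs" using setxs lenxs by (simp add: card_distinct)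
  have sxs: "sorted_wrt (\<lambda>i j. key (R i) \<le> key (R j)) xs"
    using msortI_sorted[of "map sort ls"] xs(2)[symmetric] by (simp add: sorted_wrt_map)
  have gr: "grI 0 (msortI (map sort ls)) = grI 0 (map R xs)" using xs(2) by simp
  show ?thesis
  proof
    assume "explorable (star_V ls) (star_E ls) (star_L ls) 0"
    then obtain js where js: "journey (star_E ls) (star_L ls) 0 0 js" "star_V ls \<subseteq> visited js"
      unfolding explorable_def by blast
    have "\<forall>i < length ls. Suc i \<in> visited js" using js(2) unfolding star_V_def by auto
    from sched_exists[OF js(1) this] obtain a b where
      ab: "\<forall>i < length ls. a i < b i \<and> a i \<in> set (ls ! i) \<and> b i \<in> set (ls ! i)"
      and dj: "\<forall>i < length ls. \<forall>i' < length ls. i \<noteq> i' \<longrightarrow> b i < a i' \<or> b i' < a i"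
      by blast
    have len2: "2 \<le> length (ls ! i)" if "i < m" for i
    proof -
      have "{a i, b i} \<subseteq> set (ls ! i)" "a i \<noteq> b i" using ab that unfolding m_def by auto
      then have "card {a i, b i} \<le> card (set (ls ! i))" by (intro card_mono) auto
      also have "\<dots> \<le> length (ls ! i)" by (rule card_length)
      finally show ?thesis using \<open>a i \<noteq> b i\<close> by simp
    qed
    have A: "\<forall>r\<in>set (map sort ls). 2 \<le> length r"
      using len2 unfolding m_def by (auto simp: in_set_conv_nth)
    have "grI 0 (map R xs)"
    proof (rule greedy_ok[OF dxs])
      show "\<forall>i\<in>set xs. sorted_wrt (<) (R i) \<and> 2 \<le> length (R i) \<and> length (R i) \<le> 3 \<and> a i < b i \<and> a i \<in> set (R i) \<and> b i \<in> set (R i)"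
        using setxs li len2 ab unfolding R_def m_def by (auto intro: strict_sort)
      show "\<forall>i\<in>set xs. \<forall>j\<in>set xs. i \<noteq> j \<longrightarrow> b i < a j \<or> b j < a i"
        using setxs dj unfolding m_def by auto
      show "sorted_wrt (\<lambda>i j. key (R i) \<le> key (R j)) xs" by (rule sxs)
      show "\<forall>i\<in>set xs. 0 < a i" using setxs li ab unfolding m_def by auto
    qed
    then show "(\<forall>r\<in>set (map sort ls). 2 \<le> length r) \<and> grI 0 (msortI (map sort ls))"
      using A gr by simp
  next
    assume "(\<forall>r\<in>set (map sort ls). 2 \<le> length r) \<and> grI 0 (msortI (map sort ls))"
    then have g: "grI 0 (map (\<lambda>i. sort (ls ! i)) xs)" using gr unfolding R_def by simp
    have xne: "xs \<noteq> []" using setxs ne unfolding m_def by auto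
    obtain js where js: "journey (star_E ls) (star_L ls) 0 0 js" "Suc ` set xs \<subseteq> visited js"
      using build[OF g xne] setxs li unfolding m_def by auto
    have "js ! 0 \<in> set js" "fst (js ! 0) = 0" using js(1) unfolding journey_def by auto
    then have v0: "0 \<in> visited js" unfolding visited_def by force
    have "star_V ls \<subseteq> visited js"
    proof
      fix v assume "v \<in> star_V ls"
      then have "v = 0 \<or> (\<exists>i. v = Suc i \<and> i < m)" unfolding star_V_def m_def by (cases v) auto
      then show "v \<in> visited js" using v0 js(2) setxs by auto
    qed
    then show "explorable (star_V ls) (star_E ls) (star_L ls) 0"
      unfolding explorable_def using js(1) by blast
  qed
qed

lemma clog_log:
  assumes "1 \<le> m"
  shows "real (clog m) \<le> 2 * log 2 (real (m + 1))"
proof -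
  have L1: "1 \<le> log 2 (real (m + 1))" using assms by simp
  show ?thesis
  proof (cases "m \<le> 1")
    case True
    then show ?thesis using L1 by (simp add: clog.simps)
  next
    case False
    then have p: "2 ^ clog m \<le> 2 * m - 2" using clog_pow by simp
    have "(2::nat) ^ clog m \<le> 2 * (m + 1)" by (rule le_trans[OF p]) simp
    then have le: "(2::real) ^ clog m \<le> 2 * real (m + 1)"
      by (metis of_nat_le_iff of_nat_mult of_nat_numeral of_nat_power)
    have "real (clog m) = log 2 (2 ^ clog m)" by simp
    also have "\<dots> \<le> log 2 (2 * real (m + 1))"
      using le by (subst log_le_cancel_iff) auto
    also have "\<dots> = 1 + log 2 (real (m + 1))" by (subst log_mult) auto
    finally show ?thesis using L1 by linarith
  qed
qed

theorem corollary1: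
  shows "\<exists>(P :: prog) (c :: real). \<forall>ls. star_input 3 ls \<longrightarrow>
           (let n = length ls + 1 in
             \<exists>t. run P (enc_input ls)
                   (bool_val (explorable (star_V ls) (star_E ls) (star_L ls) 0)) t
                 \<and> real t \<le> c * real n * log 2 (real n) + c)"
proof (intro exI allI impI)
  fix ls assume inp: "star_input 3 ls"
  let ?m = "length ls"
  have m1: "1 \<le> ?m" using inp unfolding star_input_def by (cases ls) auto
  have l3: "\<forall>x\<in>set ls. length x \<le> 3" using inp unfolding star_input_def by auto
  obtain t where t: "eval Prog [enl ls] (Prog ! 0)
     (bool_val ((\<forall>r\<in>set (map sort ls). 2 \<le> length r) \<and> grI 0 (msortI (map sort ls)))) t"
     "t \<le> 100 * ?m * clog ?m + 600 * ?m + 100"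
    using main_run[OF l3] by blast
  have r: "run Prog (enc_input ls) (bool_val (explorable (star_V ls) (star_E ls) (star_L ls) 0)) t"
    unfolding run_def enc_input_enl explorable_iff[OF inp] using t(1) by (simp add: Prog_def)
  define L where "L = log 2 (real (?m + 1))"
  have L1: "1 \<le> L" unfolding L_def using m1 by simp
  have cl: "real (clog ?m) \<le> 2 * L" unfolding L_def using clog_log[OF m1] .
  have mn: "real ?m \<le> real (?m + 1)" by simp
  have a1: "real ?m * real (clog ?m) \<le> real (?m + 1) * (2 * L)"
    using mult_mono[OF mn cl] by simp
  have a2: "real ?m \<le> real (?m + 1) * L"
    using mult_mono[OF mn L1] by simp
  have tr: "real t \<le> 100 * (real ?m * real (clog ?m)) + 600 * real ?m + 100"
    using t(2) by (metis (mono_tags, lifting) of_nat_add of_nat_le_iff of_nat_mult of_nat_numeral mult.assoc)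
  have "real t \<le> 800 * (real (?m + 1) * L) + 800" using tr a1 a2 by linarith
  then have "real t \<le> 800 * real (?m + 1) * log 2 (real (?m + 1)) + 800"
    unfolding L_def by (simp add: algebra_simps)
  then show "let n = length ls + 1 in \<exists>t. run Prog (enc_input ls)
      (bool_val (explorable (star_V ls) (star_E ls) (star_L ls) 0)) t \<and> real t \<le> 800 * real n * log 2 (real n) + 800"
    using r unfolding Let_def by blast
qed

end
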